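(* Let $N\ge3$. For any $a\in\mathbb{R}^N$, $r>0$ and $u\in\mathcal{D}^{1,2}(\mathbb{R}^N)$, $$\lim_{y\to a}\int_{B(y,r)}\frac{u^2(x)}{|x-y|^2}dx=\int_{B(a,r)}\frac{u^2(x)}{|x-a|^2}dx.$$
   Context: $\mathcal{D}^{1,2}(\mathbb{R}^N)$ is the completion of $C_c^\infty(\mathbb{R}^N)$ with respect to the norm $(\int_{\mathbb{R}^N}|\nabla u|^2dx)^{1/2}$; $B(a,r)$ is the open ball of center $a$ and radius $r$. *)

theory Defs
  imports "HOL-Analysis.Analysis"
begin

fun Ck :: "nat \<Rightarrow> ('a::euclidean_space \<Rightarrow> real) \<Rightarrow> bool" where
  "Ck 0 f = continuous_on UNIV f"
| "Ck (Suc k) f = (\<exists>f'. (\<forall>x. (f has_derivative f' x) (at x)) \<and> (\<forall>v. Ck k (\<lambda>x. f' x v)))"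

definition smooth :: "('a::euclidean_space \<Rightarrow> real) \<Rightarrow> bool" where
  "smooth f \<longleftrightarrow> (\<forall>k. Ck k f)"

definition Cc_inf :: "('a::euclidean_space \<Rightarrow> real) set" where
  "Cc_inf = {f. smooth f \<and> compact (closure {x. f x \<noteq> 0})}"

definition dirichlet :: "('a::euclidean_space \<Rightarrow> real) \<Rightarrow> real" where
  "dirichlet f = (\<integral>x. (\<Sum>b\<in>Basis. (frechet_derivative f (at x) b)^2) \<partial>lebesgue)"

text \<open>D^{1,2}(R^N), N \<ge> 3: the completion of C_c^\<infinity> w.r.t. the norm (\<integral>|\<nabla>u|^2)^(1/2),
  realised (as usual, via the Sobolev inequality) as the measurable functions u that are
  L^{2^*}-limits (2^* = 2N/(N-2)) of sequences in C_c^\<infinity> which are Cauchy in the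
  gradient norm.\<close>
definition D12 :: "('a::euclidean_space \<Rightarrow> real) set" where
  "D12 = {u. u \<in> borel_measurable lebesgue \<and>
     (\<exists>\<phi>::nat \<Rightarrow> 'a \<Rightarrow> real. (\<forall>n. \<phi> n \<in> Cc_inf) \<and>
        (\<forall>e>0. \<exists>M. \<forall>m\<ge>M. \<forall>n\<ge>M. dirichlet (\<lambda>x. \<phi> m x - \<phi> n x) < e) \<and>
        ((\<lambda>n. \<integral>\<^sup>+ x. ennreal (\<bar>\<phi> n x - u x\<bar> powr (2 * real DIM('a) / (real DIM('a) - 2))) \<partial>lebesgue)
           \<longlonglongrightarrow> 0))}"

end

theory Submission
  imports Defs
begin


lemma integral_lborel_shift:
  fixes f :: "'a::euclidean_space \<Rightarrow> real"
  assumes "f \<in> borel_measurable borel"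
  shows "(\<integral>x. f (c + x) \<partial>lborel) = (\<integral>x. f x \<partial>lborel)"
proof -
  have "(\<integral>x. f x \<partial>lborel) = (\<integral>x. f x \<partial>(distr lborel borel ((+) c)))"
    by (simp add: lborel_distr_plus)
  also have "\<dots> = (\<integral>x. f (c + x) \<partial>lborel)"
    using assms by (intro integral_distr) auto
  finally show ?thesis by simp
qed

lemma integrable_lborel_shift:
  fixes f :: "'a::euclidean_space \<Rightarrow> real"
  assumes "f \<in> borel_measurable borel" "integrable lborel f"
  shows "integrable lborel (\<lambda>x. f (c + x))"
proof -
  have "integrable (distr lborel borel ((+) c)) f"
    using assms by (simp add: lborel_distr_plus)
  then show ?thesis
    using assms by (subst (asm) integrable_distr_eq) auto
qed

lemma nn_integral_lborel_shift:
  fixes f :: "'a::euclidean_space \<Rightarrow> ennreal"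
  assumes "f \<in> borel_measurable borel"
  shows "(\<integral>\<^sup>+x. f (c + x) \<partial>lborel) = (\<integral>\<^sup>+x. f x \<partial>lborel)"
proof -
  have "(\<integral>\<^sup>+x. f x \<partial>lborel) = (\<integral>\<^sup>+x. f x \<partial>(distr lborel borel ((+) c)))"
    by (simp add: lborel_distr_plus)
  also have "\<dots> = (\<integral>\<^sup>+x. f (c + x) \<partial>lborel)"
    using assms by (intro nn_integral_distr) auto
  finally show ?thesis by simp
qed



lemma ibp_zero:
  fixes g D :: "'a::euclidean_space \<Rightarrow> real" and b :: 'a
  assumes gc: "continuous_on UNIV g" and Dc: "continuous_on UNIV D"
    and K: "compact K" and gK: "\<And>x. x \<notin> K \<Longrightarrow> g x = 0" and DK: "\<And>x. x \<notin> K \<Longrightarrow> D x = 0"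
    and der: "\<And>x. ((\<lambda>t. g (x + t *\<^sub>R b)) has_real_derivative D x) (at 0)"
  shows "(\<integral>x. D x \<partial>lborel) = 0"
proof -
  obtain a0 where a0: "\<forall>x\<in>K. norm x \<le> a0" using compact_imp_bounded[OF K] bounded_iff by blast
  define R where "R = max a0 0"
  have R: "K \<subseteq> cball 0 R" "R \<ge> 0" using a0 unfolding R_def by auto
  have "bounded (D ` K)"
    by (rule compact_imp_bounded[OF compact_continuous_image[OF continuous_on_subset[OF Dc subset_UNIV] K]])
  then obtain MD where MD0: "\<And>x. x \<in> K \<Longrightarrow> norm (D x) \<le> MD" unfolding bounded_iff by blast
  define M where "M = max MD 0"
  have MD: "\<bar>D x\<bar> \<le> M" for x
    using MD0[of x] DK[of x] unfolding M_def by (cases "x \<in> K") auto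
  have der': "((\<lambda>s. g (x + s *\<^sub>R b)) has_real_derivative D (x + t *\<^sub>R b)) (at t)" for x t
  proof -
    have "((\<lambda>s. g ((x + t *\<^sub>R b) + s *\<^sub>R b)) has_real_derivative D (x + t *\<^sub>R b)) (at 0)"
      by (rule der)
    then have "((\<lambda>s. (\<lambda>s. g (x + s *\<^sub>R b)) (s + t)) has_real_derivative D (x + t *\<^sub>R b)) (at 0)"
      by (simp add: algebra_simps scaleR_add_left)
    then show ?thesis using DERIV_shift[of "\<lambda>s. g (x + s *\<^sub>R b)" _ 0 t] by simp
  qed
  have gcont: "continuous_on UNIV (\<lambda>x. g (c + x))" for c
    by (intro continuous_on_compose2[OF gc]) (auto intro!: continuous_intros)
  have gint: "integrable lborel g"
  proof -
    have "integrable lborel (\<lambda>x. indicator K x *\<^sub>R g x)"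
      using K gc by (intro borel_integrable_compact) (auto intro: continuous_on_subset)
    moreover have "(\<lambda>x. indicator K x *\<^sub>R g x) = g" using gK by (auto simp: indicator_def fun_eq_iff)
    ultimately show ?thesis by simp
  qed
  have gmeas: "g \<in> borel_measurable borel" using gc by (simp add: borel_measurable_continuous_onI)
  define t :: "nat \<Rightarrow> real" where "t n = inverse (real (Suc n))" for n
  have t0: "t n > 0" "t n \<le> 1" for n unfolding t_def by (auto simp: field_simps)
  define h where "h n x = (g (x + t n *\<^sub>R b) - g x) / t n" for n x
  have hint: "(\<integral>x. h n x \<partial>lborel) = 0" for n
  proof -
    have i1: "integrable lborel (\<lambda>x. g (t n *\<^sub>R b + x))"
      by (rule integrable_lborel_shift[OF gmeas gint])
    have "(\<integral>x. h n x \<partial>lborel) = ((\<integral>x. g (t n *\<^sub>R b + x) \<partial>lborel) - (\<integral>x. g x \<partial>lborel)) / t n"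
      unfolding h_def using i1 gint by (simp add: add.commute)
    also have "\<dots> = 0" using integral_lborel_shift[OF gmeas, of "t n *\<^sub>R b"] by simp
    finally show ?thesis .
  qed
  have lim: "(\<lambda>n. \<integral>x. h n x \<partial>lborel) \<longlonglongrightarrow> (\<integral>x. D x \<partial>lborel)"
  proof (rule integral_dominated_convergence[where w = "\<lambda>x. M * indicator (cball 0 (R + norm b)) x"])
    show "D \<in> borel_measurable lborel" using Dc by (simp add: borel_measurable_continuous_onI)
    show "h n \<in> borel_measurable lborel" for n
    proof -
      have c1: "continuous_on UNIV (\<lambda>x. g (x + t n *\<^sub>R b))" using gcont[of "t n *\<^sub>R b"] by (simp add: add.commute)
      have "continuous_on UNIV (h n)" unfolding h_def using t0[of n]
        by (intro continuous_intros c1 gc) auto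
      then show ?thesis by (simp add: borel_measurable_continuous_onI)
    qed
    show "integrable lborel (\<lambda>x. M * indicator (cball 0 (R + norm b)) x)"
      by (intro integrable_mult_right integrable_real_indicator) (use emeasure_bounded_finite[of "cball 0 (R + norm b)"] in auto)
    show "AE x in lborel. (\<lambda>n. h n x) \<longlonglongrightarrow> D x"
    proof (rule AE_I2)
      fix x
      have "((\<lambda>s. (g (x + s *\<^sub>R b) - g (x + 0 *\<^sub>R b)) / (s - 0)) \<longlongrightarrow> D x) (at 0)"
        using der[of x] by (simp only: has_field_derivative_iff)
      moreover have "filterlim t (at 0) sequentially"
        unfolding t_def by (intro filterlim_atI LIMSEQ_inverse_real_of_nat) auto
      ultimately have "(\<lambda>n. (\<lambda>s. (g (x + s *\<^sub>R b) - g (x + 0 *\<^sub>R b)) / (s - 0)) (t n)) \<longlonglongrightarrow> D x"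
        by (rule filterlim_compose)
      then show "(\<lambda>n. h n x) \<longlonglongrightarrow> D x" unfolding h_def by simp
    qed
    show "AE x in lborel. norm (h n x) \<le> M * indicator (cball 0 (R + norm b)) x" for n
    proof (rule AE_I2)
      fix x
      show "norm (h n x) \<le> M * indicator (cball 0 (R + norm b)) x"
      proof (cases "x \<in> cball 0 (R + norm b)")
        case True
        obtain z where "0 < z" "z < t n" and eq: "g (x + t n *\<^sub>R b) - g (x + 0 *\<^sub>R b) = (t n - 0) * D (x + z *\<^sub>R b)"
          using MVT2[of 0 "t n" "\<lambda>s. g (x + s *\<^sub>R b)" "\<lambda>s. D (x + s *\<^sub>R b)"] t0[of n] der' by blast
        then have "h n x = D (x + z *\<^sub>R b)" unfolding h_def using t0[of n] by simp
        then show ?thesis using True MD by simp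
      next
        case False
        then have nx: "norm x > R + norm b" by auto
        have "norm (x + t n *\<^sub>R b) \<ge> norm x - t n * norm b"
          using norm_triangle_ineq2[of x "- (t n *\<^sub>R b)"] t0[of n] by simp
        moreover have "t n * norm b \<le> norm b" using t0[of n] by (simp add: mult_left_le_one_le)
        ultimately have "norm (x + t n *\<^sub>R b) > R" using nx by linarith
        then have "x + t n *\<^sub>R b \<notin> K" using R(1) by fastforce
        moreover have "x \<notin> K"
        proof
          assume "x \<in> K" then have "norm x \<le> R" using R(1) by auto
          then show False using nx norm_ge_zero[of b] by linarith
        qed
        ultimately show ?thesis using False gK unfolding h_def by simp
      qed
    qed
  qed
  then have "(\<lambda>n. 0) \<longlonglongrightarrow> (\<integral>x. D x \<partial>lborel)" by (simp add: hint)
  then show ?thesis using LIMSEQ_unique[OF _ tendsto_const] by metis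
qed



lemma integrable_cont_compact:
  fixes f :: "'a::euclidean_space \<Rightarrow> real"
  assumes "continuous_on UNIV f" "compact K" "\<And>x. x \<notin> K \<Longrightarrow> f x = 0"
  shows "integrable lborel f"
proof -
  have "integrable lborel (\<lambda>x. indicator K x *\<^sub>R f x)"
    using assms by (intro borel_integrable_compact) (auto intro: continuous_on_subset)
  moreover have "(\<lambda>x. indicator K x *\<^sub>R f x) = f" using assms(3) by (auto simp: indicator_def fun_eq_iff)
  ultimately show ?thesis by simp
qed

lemma dir_deriv:
  assumes der: "(\<psi> has_derivative \<psi>') (at x)"
  shows "((\<lambda>t. \<psi> (x + t *\<^sub>R b)) has_real_derivative \<psi>' b) (at 0)"
proof -
  have "((\<lambda>t. x + t *\<^sub>R b) has_derivative (\<lambda>t. t *\<^sub>R b)) (at 0)" by (auto intro!: derivative_eq_intros)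
  moreover have "(\<psi> has_derivative \<psi>') (at (x + 0 *\<^sub>R b))" using der by simp
  ultimately have "((\<lambda>t. \<psi> (x + t *\<^sub>R b)) has_derivative (\<lambda>t. \<psi>' (t *\<^sub>R b))) (at 0)"
    by (rule has_derivative_compose)
  moreover have "(\<lambda>t. \<psi>' (t *\<^sub>R b)) = (\<lambda>t. \<psi>' b * t)"
    using linear.scaleR[OF has_derivative_linear[OF der]] by (auto simp: fun_eq_iff mult.commute)
  ultimately show ?thesis by (simp add: has_field_derivative_def)
qed

lemma deriv_g:
  fixes \<psi> :: "'a::euclidean_space \<Rightarrow> real"
  assumes der: "(\<psi> has_derivative \<psi>') (at x)" and b: "b \<in> Basis" and e: "\<epsilon> > 0"
  shows "((\<lambda>t. \<psi> (x + t *\<^sub>R b)^2 * (inner (x + t *\<^sub>R b - y) b / ((norm (x + t *\<^sub>R b - y))^2 + \<epsilon>)))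
     has_real_derivative
      (2 * \<psi> x * \<psi>' b * (inner (x - y) b / ((norm (x - y))^2 + \<epsilon>)) +
       \<psi> x ^ 2 * (1 / ((norm (x - y))^2 + \<epsilon>) - 2 * (inner (x - y) b)^2 / ((norm (x - y))^2 + \<epsilon>)^2))) (at 0)"
proof -
  define c where "c = inner (x - y) b"
  define d where "d = (norm (x - y))^2 + \<epsilon>"
  have d0: "d > 0" unfolding d_def using e by (simp add: add_nonneg_pos)
  have bb: "inner b b = 1" using b by simp
  have eq: "\<psi> (x + t *\<^sub>R b)^2 * (inner (x + t *\<^sub>R b - y) b / ((norm (x + t *\<^sub>R b - y))^2 + \<epsilon>))
     = \<psi> (x + t *\<^sub>R b)^2 * ((c + t) / (d + 2 * t * c + t^2))" for t
  proof -
    have v: "x + t *\<^sub>R b - y = (x - y) + t *\<^sub>R b" by (simp add: algebra_simps)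
    have i1: "inner ((x - y) + t *\<^sub>R b) b = c + t" unfolding c_def inner_add_left using bb by simp
    have i2: "(norm ((x - y) + t *\<^sub>R b))^2 = (norm (x - y))^2 + 2 * t * c + t^2"
      unfolding power2_norm_eq_inner c_def inner_add_left inner_add_right inner_scaleR_left inner_scaleR_right
      using bb by (simp add: inner_commute[of b "x - y"] power2_eq_square distrib_left)
    have "inner (x + t *\<^sub>R b - y) b = c + t" and
      "(norm (x + t *\<^sub>R b - y))^2 = (norm (x - y))^2 + 2 * t * c + t^2"
      unfolding v using i1 i2 by simp_all
    then show ?thesis unfolding d_def by (simp add: algebra_simps)
  qed
  have p: "((\<lambda>t. \<psi> (x + t *\<^sub>R b)) has_real_derivative \<psi>' b) (at 0)" by (rule dir_deriv[OF der])
  have "((\<lambda>t. \<psi> (x + t *\<^sub>R b)^2 * ((c + t) / (d + 2 * t * c + t^2))) has_real_derivative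
      (2 * \<psi> x * \<psi>' b * (c / d) + \<psi> x ^ 2 * (1 / d - 2 * c^2 / d^2))) (at 0)"
  proof -
    have num: "((\<lambda>t. c + t) has_real_derivative 1) (at 0)" by (auto intro!: derivative_eq_intros)
    have den: "((\<lambda>t. d + 2 * t * c + t^2) has_real_derivative 2 * c) (at 0)"
      by (auto intro!: derivative_eq_intros)
    have nz: "d + 2 * 0 * c + 0^2 \<noteq> 0" using d0 by simp
    from DERIV_mult[OF DERIV_power[OF p, of 2] DERIV_divide[OF num den nz]]
    show ?thesis
      apply (rule DERIV_cong) apply simp
      using d0 apply (simp add: divide_simps power2_eq_square)
      done
  qed
  then show ?thesis unfolding eq c_def[symmetric] d_def[symmetric] .
qed



lemma pointwise_hardy:
  fixes p d s \<epsilon> l :: real and a c :: "'b \<Rightarrow> real" and I :: "'b set"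
  assumes fin: "finite I" and l: "l > 0" and N: "real (card I) = 2 * l + 2"
    and s: "(\<Sum>b\<in>I. (c b)^2) = s" and d: "d = s + \<epsilon>" and e: "\<epsilon> > 0" and s0: "s \<ge> 0"
  shows "(\<Sum>b\<in>I. 2 * p * a b * (c b / d) + p^2 * (1 / d - 2 * (c b)^2 / d^2))
         \<ge> l * (p^2 / d) - (1 / l) * (\<Sum>b\<in>I. (a b)^2)"
proof -
  have d0: "d > 0" using d e s0 by simp
  have each: "2 * p * a b * (c b / d) \<ge> - (l * p^2 * (c b)^2 / d^2 + (a b)^2 / l)" for b
  proof -
    have "0 \<le> (l * p * (c b / d) + a b)^2" by simp
    also have "\<dots> = l * (l * p^2 * (c b)^2 / d^2 + 2 * p * a b * (c b / d) + (a b)^2 / l)"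
      using l d0 by (simp add: field_simps power2_eq_square)
    finally have "0 \<le> l * p^2 * (c b)^2 / d^2 + 2 * p * a b * (c b / d) + (a b)^2 / l"
      using l by (simp add: zero_le_mult_iff)
    then show ?thesis by linarith
  qed
  have "(\<Sum>b\<in>I. 2 * p * a b * (c b / d) + p^2 * (1 / d - 2 * (c b)^2 / d^2))
      = (\<Sum>b\<in>I. 2 * p * a b * (c b / d)) + p^2 * (real (card I) / d - 2 * s / d^2)"
    using s by (simp add: sum.distrib sum_distrib_left[symmetric] sum_subtractf sum_divide_distrib[symmetric]
        right_diff_distrib)
  also have "\<dots> \<ge> (\<Sum>b\<in>I. - (l * p^2 * (c b)^2 / d^2 + (a b)^2 / l)) + p^2 * (real (card I) / d - 2 * s / d^2)"
    using each by (intro add_right_mono sum_mono) auto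
  also have "(\<Sum>b\<in>I. - (l * p^2 * (c b)^2 / d^2 + (a b)^2 / l))
      = - (l * p^2 * s / d^2) - (1 / l) * (\<Sum>b\<in>I. (a b)^2)"
  proof -
    have e1: "(\<Sum>b\<in>I. l * p^2 * (c b)^2 / d^2) = l * p^2 * s / d^2"
      using s by (simp add: sum_distrib_left[symmetric] sum_divide_distrib[symmetric])
    have e2: "(\<Sum>b\<in>I. (a b)^2 / l) = (1 / l) * (\<Sum>b\<in>I. (a b)^2)"
      by (simp add: sum_divide_distrib[symmetric])
    show ?thesis unfolding minus_add_distrib sum.distrib sum_negf e1 e2 by simp
  qed
  finally have calc: "(\<Sum>b\<in>I. 2 * p * a b * (c b / d) + p^2 * (1 / d - 2 * (c b)^2 / d^2)) \<ge>
     - (l * p^2 * s / d^2) - (1 / l) * (\<Sum>b\<in>I. (a b)^2) + p^2 * (real (card I) / d - 2 * s / d^2)" .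
  have 1: "(\<Sum>b\<in>I. 2 * p * a b * (c b / d) + p^2 * (1 / d - 2 * (c b)^2 / d^2))
     \<ge> p^2 * (real (card I) / d - 2 * s / d^2 - l * s / d^2) - (1 / l) * (\<Sum>b\<in>I. (a b)^2)"
  proof -
    have id: "p^2 * (real (card I) / d - 2 * s / d^2 - l * s / d^2)
        = p^2 * (real (card I) / d - 2 * s / d^2) - l * p^2 * s / d^2"
      by (simp add: right_diff_distrib)
    show ?thesis using calc id by linarith
  qed
  have "real (card I) / d - 2 * s / d^2 - l * s / d^2 - l / d = (2 + l) * \<epsilon> / d^2"
  proof -
    have "real (card I) * d - 2 * s - l * s - l * d = (2 + l) * \<epsilon>" using N d by (simp add: algebra_simps)
    moreover have "real (card I) / d - 2 * s / d^2 - l * s / d^2 - l / d = (real (card I) * d - 2 * s - l * s - l * d) / d^2"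
      using d0 by (simp add: field_simps power2_eq_square)
    ultimately show ?thesis by simp
  qed
  also have "\<dots> \<ge> 0" using l e by simp
  finally have "p^2 * (real (card I) / d - 2 * s / d^2 - l * s / d^2) \<ge> p^2 * (l / d)"
    by (intro mult_left_mono) auto
  moreover have "p^2 * (l / d) = l * (p^2 / d)" by simp
  ultimately show ?thesis using 1 by linarith
qed



lemma hardy_eps:
  fixes \<psi> :: "'a::euclidean_space \<Rightarrow> real" and \<psi>' :: "'a \<Rightarrow> 'a \<Rightarrow> real"
  assumes N: "DIM('a) \<ge> 3" and der: "\<And>x. (\<psi> has_derivative \<psi>' x) (at x)"
    and dc: "\<And>v. continuous_on UNIV (\<lambda>x. \<psi>' x v)"
    and K: "compact K" and \<psi>K: "\<And>x. x \<notin> K \<Longrightarrow> \<psi> x = 0" and \<psi>'K: "\<And>x v. x \<notin> K \<Longrightarrow> \<psi>' x v = 0"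
    and e: "\<epsilon> > 0"
  shows "integrable lborel (\<lambda>x. \<psi> x^2 / ((norm (x - y))^2 + \<epsilon>))"
    and "(\<integral>x. \<psi> x^2 / ((norm (x - y))^2 + \<epsilon>) \<partial>lborel)
          \<le> 4 / (real DIM('a) - 2)^2 * (\<integral>x. (\<Sum>b\<in>Basis. (\<psi>' x b)^2) \<partial>lborel)"
proof -
  define d where "d x = (norm (x - y))^2 + \<epsilon>" for x
  have d0: "d x > 0" for x unfolding d_def using e by (simp add: add_nonneg_pos)
  have dne: "d x \<noteq> 0" for x using d0[of x] by simp
  have dcont: "continuous_on UNIV d" unfolding d_def by (intro continuous_intros)
  have \<psi>c: "continuous_on UNIV \<psi>"
    using der by (intro continuous_at_imp_continuous_on) (auto intro: has_derivative_continuous)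
  define D where "D b x = 2 * \<psi> x * \<psi>' x b * (inner (x - y) b / d x) +
       \<psi> x ^ 2 * (1 / d x - 2 * (inner (x - y) b)^2 / (d x)^2)" for b x
  define g where "g b x = \<psi> x^2 * (inner (x - y) b / d x)" for b x
  have Dc: "continuous_on UNIV (D b)" for b
    unfolding D_def using dne by (intro continuous_intros dc \<psi>c dcont) auto
  have DK: "x \<notin> K \<Longrightarrow> D b x = 0" for b x unfolding D_def using \<psi>K by simp
  have Dint: "integrable lborel (D b)" for b by (rule integrable_cont_compact[OF Dc K DK])
  have D0: "(\<integral>x. D b x \<partial>lborel) = 0" if b: "b \<in> Basis" for b
  proof (rule ibp_zero[where g = "g b"])
    show "continuous_on UNIV (g b)" unfolding g_def using dne by (intro continuous_intros \<psi>c dcont) auto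
    show "continuous_on UNIV (D b)" by (rule Dc)
    show "compact K" by (rule K)
    show "x \<notin> K \<Longrightarrow> g b x = 0" for x unfolding g_def using \<psi>K by simp
    show "x \<notin> K \<Longrightarrow> D b x = 0" for x by (rule DK)
    show "((\<lambda>t. g b (x + t *\<^sub>R b)) has_real_derivative D b x) (at 0)" for x
      unfolding g_def D_def d_def by (rule deriv_g[OF der b e])
  qed
  have sum0: "(\<integral>x. (\<Sum>b\<in>Basis. D b x) \<partial>lborel) = 0"
    using Dint D0 by (simp add: integral_sum)
  define F where "F x = \<psi> x^2 / d x" for x
  define G where "G x = (\<Sum>b\<in>Basis. (\<psi>' x b)^2)" for x
  have Fint: "integrable lborel F"
    by (rule integrable_cont_compact[OF _ K]) (use dne \<psi>K in \<open>auto simp: F_def intro!: continuous_intros \<psi>c dcont\<close>)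
  have Gint: "integrable lborel G"
    by (rule integrable_cont_compact[OF _ K]) (use \<psi>'K in \<open>auto simp: G_def intro!: continuous_intros dc\<close>)
  define l where "l = (real DIM('a) - 2) / 2"
  have l0: "l > 0" unfolding l_def using N by simp
  have pw: "l * F x - (1 / l) * G x \<le> (\<Sum>b\<in>Basis. D b x)" for x
  proof -
    have s: "(\<Sum>b\<in>Basis. (inner (x - y) b)^2) = (norm (x - y))^2"
      unfolding power2_norm_eq_inner euclidean_inner[of "x - y" "x - y"] by (simp add: power2_eq_square)
    show ?thesis unfolding F_def G_def D_def
      by (rule pointwise_hardy[OF _ l0 _ s d_def e]) (auto simp: l_def field_simps)
  qed
  have "(\<integral>x. l * F x - (1 / l) * G x \<partial>lborel) \<le> (\<integral>x. (\<Sum>b\<in>Basis. D b x) \<partial>lborel)"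
    using pw Fint Gint Dint by (intro integral_mono) auto
  then have "l * (\<integral>x. F x \<partial>lborel) - (1 / l) * (\<integral>x. G x \<partial>lborel) \<le> 0"
    using Fint Gint sum0 by simp
  then have "(\<integral>x. F x \<partial>lborel) \<le> (1 / l^2) * (\<integral>x. G x \<partial>lborel)"
    using l0 by (simp add: field_simps power2_eq_square)
  moreover have "1 / l^2 = 4 / (real DIM('a) - 2)^2" unfolding l_def by (simp add: power2_eq_square)
  ultimately show "(\<integral>x. \<psi> x^2 / ((norm (x - y))^2 + \<epsilon>) \<partial>lborel)
          \<le> 4 / (real DIM('a) - 2)^2 * (\<integral>x. (\<Sum>b\<in>Basis. (\<psi>' x b)^2) \<partial>lborel)"
    unfolding F_def G_def d_def by simp
  show "integrable lborel (\<lambda>x. \<psi> x^2 / ((norm (x - y))^2 + \<epsilon>))"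
    using Fint unfolding F_def d_def .
qed



lemma cc_deriv:
  assumes "\<phi> \<in> Cc_inf"
  shows "\<exists>\<phi>'. (\<forall>x. (\<phi> has_derivative \<phi>' x) (at x)) \<and> (\<forall>v. continuous_on UNIV (\<lambda>x. \<phi>' x v)) \<and>
    compact (closure {x. \<phi> x \<noteq> 0})"
proof -
  have "Ck (Suc 0) \<phi>" using assms unfolding Cc_inf_def smooth_def by blast
  moreover have "compact (closure {x. \<phi> x \<noteq> 0})" using assms unfolding Cc_inf_def by blast
  ultimately show ?thesis by simp
qed

lemma deriv_zero_outside:
  fixes \<phi> :: "'a::euclidean_space \<Rightarrow> real"
  assumes der: "(\<phi> has_derivative \<phi>') (at x)" and x: "x \<notin> closure {x. \<phi> x \<noteq> 0}"
  shows "\<phi>' v = 0"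
proof -
  have "((\<lambda>_. 0) has_derivative (\<lambda>_. 0)) (at x)" by simp
  then have "(\<phi> has_derivative (\<lambda>_. 0)) (at x)"
  proof (rule has_derivative_transform_within_open[where s = "- closure {x. \<phi> x \<noteq> 0}"])
    show "open (- closure {x. \<phi> x \<noteq> 0})" by (simp add: open_Compl)
    show "x \<in> - closure {x. \<phi> x \<noteq> 0}" using x by simp
    fix z assume z: "z \<in> - closure {x. \<phi> x \<noteq> 0}"
    show "0 = \<phi> z"
    proof (rule ccontr)
      assume "0 \<noteq> \<phi> z"
      then have "z \<in> {x. \<phi> x \<noteq> 0}" by simp
      then show False using z closure_subset[of "{x. \<phi> x \<noteq> 0}"] by (simp add: subset_iff)
    qed
  qed
  with der have "\<phi>' = (\<lambda>_. 0)" by (rule has_derivative_unique)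
  then show ?thesis by simp
qed

lemma cont_borel: "continuous_on UNIV (f :: 'a::euclidean_space \<Rightarrow> real) \<Longrightarrow> f \<in> borel_measurable lborel"
  by (simp add: borel_measurable_continuous_onI)

lemma hardy_diff:
  fixes \<phi> \<eta> :: "'a::euclidean_space \<Rightarrow> real"
  assumes N: "DIM('a) \<ge> 3" and \<phi>: "\<phi> \<in> Cc_inf" and \<eta>: "\<eta> \<in> Cc_inf" and e: "\<epsilon> > 0"
  shows "(\<integral>\<^sup>+x. ennreal ((\<phi> x - \<eta> x)^2 / ((norm (x - y))^2 + \<epsilon>)) \<partial>lebesgue)
     \<le> ennreal (4 / (real DIM('a) - 2)^2 * dirichlet (\<lambda>x. \<phi> x - \<eta> x))"
proof -
  obtain \<phi>' where d1': "\<forall>x. (\<phi> has_derivative \<phi>' x) (at x)" and c1': "\<forall>v. continuous_on UNIV (\<lambda>x. \<phi>' x v)"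
    and k1: "compact (closure {x. \<phi> x \<noteq> 0})" using cc_deriv[OF \<phi>] by blast
  note d1 = d1'[rule_format] and c1 = c1'[rule_format]
  obtain \<eta>' where d2': "\<forall>x. (\<eta> has_derivative \<eta>' x) (at x)" and c2': "\<forall>v. continuous_on UNIV (\<lambda>x. \<eta>' x v)"
    and k2: "compact (closure {x. \<eta> x \<noteq> 0})" using cc_deriv[OF \<eta>] by blast
  note d2 = d2'[rule_format] and c2 = c2'[rule_format]
  define K where "K = closure {x. \<phi> x \<noteq> 0} \<union> closure {x. \<eta> x \<noteq> 0}"
  have K: "compact K" unfolding K_def by (intro compact_Un k1 k2)
  define \<psi> where "\<psi> = (\<lambda>x. \<phi> x - \<eta> x)"
  define \<psi>' where "\<psi>' x = (\<lambda>v. \<phi>' x v - \<eta>' x v)" for x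
  have der: "(\<psi> has_derivative \<psi>' x) (at x)" for x
    unfolding \<psi>_def \<psi>'_def by (intro has_derivative_diff d1 d2)
  have dc: "continuous_on UNIV (\<lambda>x. \<psi>' x v)" for v
    unfolding \<psi>'_def by (intro continuous_intros c1 c2)
  have \<psi>K: "x \<notin> K \<Longrightarrow> \<psi> x = 0" for x
  proof -
    assume "x \<notin> K"
    then have n1: "x \<notin> closure {x. \<phi> x \<noteq> 0}" and n2: "x \<notin> closure {x. \<eta> x \<noteq> 0}"
      unfolding K_def by simp_all
    have "\<phi> x = 0"
    proof (rule ccontr)
      assume "\<phi> x \<noteq> 0"
      then have "x \<in> {x. \<phi> x \<noteq> 0}" by simp
      then show False using n1 closure_subset[of "{x. \<phi> x \<noteq> 0}"] by (simp add: subset_iff)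
    qed
    moreover have "\<eta> x = 0"
    proof (rule ccontr)
      assume "\<eta> x \<noteq> 0"
      then have "x \<in> {x. \<eta> x \<noteq> 0}" by simp
      then show False using n2 closure_subset[of "{x. \<eta> x \<noteq> 0}"] by (simp add: subset_iff)
    qed
    ultimately show ?thesis unfolding \<psi>_def by simp
  qed
  have \<psi>'K: "x \<notin> K \<Longrightarrow> \<psi>' x v = 0" for x v
    using deriv_zero_outside[OF d1, of x v] deriv_zero_outside[OF d2, of x v] unfolding K_def \<psi>'_def by simp
  note H = hardy_eps[OF N der dc K \<psi>K \<psi>'K e, of y]
  have fd: "frechet_derivative (\<lambda>x. \<phi> x - \<eta> x) (at x) = \<psi>' x" for x
    using frechet_derivative_at[OF der[of x]] unfolding \<psi>_def by simp
  have "dirichlet (\<lambda>x. \<phi> x - \<eta> x) = (\<integral>x. (\<Sum>b\<in>Basis. (\<psi>' x b)^2) \<partial>lebesgue)"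
    by (simp only: dirichlet_def fd)
  also have "\<dots> = (\<integral>x. (\<Sum>b\<in>Basis. (\<psi>' x b)^2) \<partial>lborel)"
    by (rule integral_completion, rule cont_borel, intro continuous_on_sum continuous_on_power dc)
  finally have dir: "dirichlet (\<lambda>x. \<phi> x - \<eta> x) = (\<integral>x. (\<Sum>b\<in>Basis. (\<psi>' x b)^2) \<partial>lborel)" .
  have "(\<integral>\<^sup>+x. ennreal ((\<phi> x - \<eta> x)^2 / ((norm (x - y))^2 + \<epsilon>)) \<partial>lebesgue)
      = (\<integral>\<^sup>+x. ennreal (\<psi> x^2 / ((norm (x - y))^2 + \<epsilon>)) \<partial>lborel)"
    by (simp only: nn_integral_completion \<psi>_def)
  also have "\<dots> = ennreal (\<integral>x. \<psi> x^2 / ((norm (x - y))^2 + \<epsilon>) \<partial>lborel)"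
    by (intro nn_integral_eq_integral H(1) AE_I2 divide_nonneg_nonneg add_nonneg_nonneg) (use e in auto)
  also have "\<dots> \<le> ennreal (4 / (real DIM('a) - 2)^2 * dirichlet (\<lambda>x. \<phi> x - \<eta> x))"
    unfolding dir using H(2) by (rule ennreal_leI)
  finally show ?thesis .
qed



lemma ae_subseq:
  fixes u :: "'a \<Rightarrow> real" and \<phi> :: "nat \<Rightarrow> 'a \<Rightarrow> real" and p :: real
  assumes p: "p > 0" and um: "u \<in> borel_measurable M" and \<phi>m: "\<And>n. \<phi> n \<in> borel_measurable M"
    and lim: "(\<lambda>n. \<integral>\<^sup>+x. ennreal (\<bar>\<phi> n x - u x\<bar> powr p) \<partial>M) \<longlonglongrightarrow> 0"
  shows "\<exists>r. strict_mono r \<and> (AE x in M. (\<lambda>n. \<phi> (r n) x) \<longlonglongrightarrow> u x)"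
proof -
  note [measurable] = um \<phi>m
  define I where "I n = (\<integral>\<^sup>+x. ennreal (\<bar>\<phi> n x - u x\<bar> powr p) \<partial>M)" for n
  obtain N0 where N0: "\<And>n. n \<ge> N0 \<Longrightarrow> I n < 1"
    using order_tendstoD(2)[OF lim, of 1] unfolding I_def by (auto simp: eventually_sequentially)
  define v where "v n x = \<bar>\<phi> (n + N0) x - u x\<bar> powr p" for n x
  have vm: "v n \<in> borel_measurable M" for n unfolding v_def by measurable
  have nv: "norm (v n x) = v n x" for n x unfolding v_def by simp
  have vint: "integrable M (v n)" for n
  proof (rule integrableI_bounded[OF vm])
    have "I (n + N0) < 1" by (rule N0) simp
    also have "(1::ennreal) < \<infinity>" by simp
    finally show "(\<integral>\<^sup>+x. ennreal (norm (v n x)) \<partial>M) < \<infinity>" unfolding nv unfolding v_def I_def .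
  qed
  have "(\<lambda>n. I (n + N0)) \<longlonglongrightarrow> ennreal 0"
    using LIMSEQ_ignore_initial_segment[OF lim, of N0] unfolding I_def by simp
  then have "(\<lambda>n. enn2real (I (n + N0))) \<longlonglongrightarrow> 0" by (rule tendsto_enn2real) simp
  moreover have "(\<integral>x. norm (v n x) \<partial>M) = enn2real (I (n + N0))" for n
  proof -
    have "(\<integral>x. norm (v n x) \<partial>M) = (\<integral>x. v n x \<partial>M)" by (simp only: nv)
    also have "\<dots> = enn2real (I (n + N0))"
      unfolding I_def v_def by (rule integral_eq_nn_integral) (use vm[of n] in \<open>auto simp: v_def\<close>)
    finally show ?thesis .
  qed
  ultimately have "(\<lambda>n. (\<integral>x. norm (v n x) \<partial>M)) \<longlonglongrightarrow> 0" by simp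
  from tendsto_L1_AE_subseq[OF vint this]
  obtain r where r: "strict_mono r" and ae: "AE x in M. (\<lambda>n. v (r n) x) \<longlonglongrightarrow> 0" by blast
  have "AE x in M. (\<lambda>n. \<phi> (r n + N0) x) \<longlonglongrightarrow> u x"
    using ae
  proof eventually_elim
    case (elim x)
    have "(\<lambda>n. v (r n) x powr (1 / p)) \<longlonglongrightarrow> 0"
      by (rule tendsto_zero_powrI[OF elim tendsto_const]) (use p in \<open>auto simp: v_def\<close>)
    moreover have "v (r n) x powr (1 / p) = \<bar>\<phi> (r n + N0) x - u x\<bar>" for n
      unfolding v_def using p by (simp add: powr_powr)
    ultimately have "(\<lambda>n. \<bar>\<phi> (r n + N0) x - u x\<bar>) \<longlonglongrightarrow> 0" by simp
    then show ?case by (simp add: tendsto_rabs_zero_iff LIM_zero_iff)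
  qed
  moreover have "strict_mono (\<lambda>n. r n + N0)" using r by (simp add: strict_mono_def)
  ultimately show ?thesis by blast
qed



lemma cc_cont: "\<phi> \<in> Cc_inf \<Longrightarrow> continuous_on UNIV (\<phi> :: 'a::euclidean_space \<Rightarrow> real)"
proof -
  assume "\<phi> \<in> Cc_inf"
  then obtain \<phi>' where d: "\<forall>x. (\<phi> has_derivative \<phi>' x) (at x)" using cc_deriv by blast
  show ?thesis
    using d by (intro continuous_at_imp_continuous_on) (auto intro: has_derivative_continuous)
qed

lemma cc_meas: "\<phi> \<in> Cc_inf \<Longrightarrow> (\<phi> :: 'a::euclidean_space \<Rightarrow> real) \<in> borel_measurable lebesgue"
  by (intro measurable_completion cont_borel cc_cont)

lemma D12_hardy:
  fixes u :: "'a::euclidean_space \<Rightarrow> real" and \<phi> :: "nat \<Rightarrow> 'a \<Rightarrow> real"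
  assumes N: "DIM('a) \<ge> 3" and um: "u \<in> borel_measurable lebesgue"
    and \<phi>: "\<And>n. \<phi> n \<in> Cc_inf"
    and cauchy: "\<forall>e>0. \<exists>M. \<forall>m\<ge>M. \<forall>n\<ge>M. dirichlet (\<lambda>x. \<phi> m x - \<phi> n x) < e"
    and lim: "(\<lambda>n. \<integral>\<^sup>+ x. ennreal (\<bar>\<phi> n x - u x\<bar> powr (2 * real DIM('a) / (real DIM('a) - 2))) \<partial>lebesgue) \<longlonglongrightarrow> 0"
    and e: "e > 0"
  shows "\<exists>M. \<forall>m\<ge>M. \<forall>y. (\<integral>\<^sup>+x. ennreal ((u x - \<phi> m x)^2 / (norm (x - y))^2) \<partial>lebesgue)
            \<le> ennreal (4 / (real DIM('a) - 2)^2 * e)"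
proof -
  note [measurable] = um cc_meas[OF \<phi>]
  have p: "2 * real DIM('a) / (real DIM('a) - 2) > 0" using N by simp
  obtain r where r: "strict_mono r" and ae: "AE x in lebesgue. (\<lambda>n. \<phi> (r n) x) \<longlonglongrightarrow> u x"
    using ae_subseq[OF p um cc_meas[OF \<phi>] lim] by blast
  obtain M where M: "\<And>m n. m \<ge> M \<Longrightarrow> n \<ge> M \<Longrightarrow> dirichlet (\<lambda>x. \<phi> m x - \<phi> n x) < e"
    using cauchy e by blast
  define C where "C = 4 / (real DIM('a) - 2)^2"
  have C0: "C \<ge> 0" unfolding C_def by simp
  have "(\<integral>\<^sup>+x. ennreal ((u x - \<phi> m x)^2 / (norm (x - y))^2) \<partial>lebesgue) \<le> ennreal (C * e)"
    if m: "m \<ge> M" for m y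
  proof -
    define f where "f n x = ennreal ((\<phi> (r n) x - \<phi> m x)^2 / ((norm (x - y))^2 + inverse (real (Suc n))))" for n x
    have fm: "f n \<in> borel_measurable lebesgue" for n
    proof -
      have pos: "(norm (x - y))^2 + inverse (real (Suc n)) \<noteq> 0" for x
      proof -
        have "inverse (real (Suc n)) > 0" by simp
        then show ?thesis by (smt (verit) zero_le_power2)
      qed
      have "(\<lambda>x. (\<phi> (r n) x - \<phi> m x)^2 / ((norm (x - y))^2 + inverse (real (Suc n)))) \<in> borel_measurable lebesgue"
        by (intro measurable_completion cont_borel continuous_intros cc_cont \<phi>) (use pos in auto)
      then show ?thesis unfolding f_def by (rule measurable_compose[OF _ measurable_ennreal])
    qed
    have bnd: "(\<integral>\<^sup>+x. f n x \<partial>lebesgue) \<le> ennreal (C * e)" if n: "n \<ge> M" for n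
    proof -
      have "(\<integral>\<^sup>+x. f n x \<partial>lebesgue) \<le> ennreal (C * dirichlet (\<lambda>x. \<phi> (r n) x - \<phi> m x))"
        unfolding f_def C_def by (rule hardy_diff[OF N \<phi> \<phi>]) simp
      also have "\<dots> \<le> ennreal (C * e)"
      proof (rule ennreal_leI, rule mult_left_mono)
        have "r n \<ge> M" using seq_suble[OF r, of n] n by simp
        then show "dirichlet (\<lambda>x. \<phi> (r n) x - \<phi> m x) \<le> e" using M[of "r n" m] m by simp
      qed (rule C0)
      finally show ?thesis .
    qed
    have "liminf (\<lambda>n. \<integral>\<^sup>+x. f n x \<partial>lebesgue) \<le> ennreal (C * e)"
      by (rule Liminf_le) (use bnd in \<open>auto simp: eventually_sequentially\<close>)
    moreover have "(\<integral>\<^sup>+x. liminf (\<lambda>n. f n x) \<partial>lebesgue) \<le> liminf (\<lambda>n. \<integral>\<^sup>+x. f n x \<partial>lebesgue)"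
      by (rule nn_integral_liminf[OF fm])
    moreover have "(\<integral>\<^sup>+x. ennreal ((u x - \<phi> m x)^2 / (norm (x - y))^2) \<partial>lebesgue)
        \<le> (\<integral>\<^sup>+x. liminf (\<lambda>n. f n x) \<partial>lebesgue)"
    proof (rule nn_integral_mono_AE)
      show "AE x in lebesgue. ennreal ((u x - \<phi> m x)^2 / (norm (x - y))^2) \<le> liminf (\<lambda>n. f n x)"
        using ae
      proof eventually_elim
        case (elim x)
        show ?case
        proof (cases "x = y")
          case True then show ?thesis by simp
        next
          case False
          have "(\<lambda>n. (\<phi> (r n) x - \<phi> m x)^2 / ((norm (x - y))^2 + inverse (real (Suc n))))
              \<longlonglongrightarrow> (u x - \<phi> m x)^2 / ((norm (x - y))^2 + 0)"
            using False by (intro tendsto_intros elim LIMSEQ_inverse_real_of_nat) simp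
          then have "(\<lambda>n. f n x) \<longlonglongrightarrow> ennreal ((u x - \<phi> m x)^2 / (norm (x - y))^2)"
            unfolding f_def by (intro tendsto_ennrealI) simp
          then have "liminf (\<lambda>n. f n x) = ennreal ((u x - \<phi> m x)^2 / (norm (x - y))^2)"
            by (intro lim_imp_Liminf) simp_all
          then show ?thesis by simp
        qed
      qed
    qed
    ultimately show ?thesis by (meson order_trans)
  qed
  then show ?thesis unfolding C_def by blast
qed



lemma dyadic_index:
  fixes t r :: real
  assumes t: "0 < t" "t < r"
  shows "\<exists>k::nat. r / 2^(k+1) \<le> t \<and> t < r / 2^k"
proof -
  have "\<exists>n. (1/2::real)^n < t / r" using t by (intro real_arch_pow_inv) auto
  then obtain n where "(1/2::real)^n < t / r" by blast
  then have ex: "\<exists>k::nat. r / 2^(k+1) \<le> t"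
    using t by (intro exI[of _ n]) (auto simp: field_simps power_divide)
  define k where "k = (LEAST k::nat. r / 2^(k+1) \<le> t)"
  have k1: "r / 2^(k+1) \<le> t" unfolding k_def by (rule LeastI_ex[OF ex])
  have k2: "t < r / 2^k"
  proof (cases k)
    case 0 then show ?thesis using t by simp
  next
    case (Suc j)
    then have "\<not> (r / 2^(j+1) \<le> t)" using not_less_Least[of j "\<lambda>k. r / 2^(k+1) \<le> t"] unfolding k_def by simp
    then show ?thesis using Suc by simp
  qed
  show ?thesis using k1 k2 by blast
qed

lemma four_pow: "(4::real)^k = 2^(k*2)"
proof -
  have "(4::real)^k = (2^2)^k" by simp
  also have "\<dots> = 2^(2*k)" by (rule power_mult[symmetric])
  also have "\<dots> = 2^(k*2)" by (simp add: mult.commute)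
  finally show ?thesis .
qed

lemma inv_sq_ball:
  assumes N: "DIM('a::euclidean_space) \<ge> 3"
  shows "(\<integral>\<^sup>+z. ennreal (indicator (ball (0::'a) r) z / (norm z)^2) \<partial>lborel) < \<infinity>"
proof (cases "r > 0")
  case False
  then have "ball (0::'a) r = {}" by simp
  then have "(\<lambda>z. ennreal (indicator (ball (0::'a) r) z / (norm z)^2)) = (\<lambda>z. 0)"
    by (simp only: \<open>ball (0::'a) r = {}\<close>) simp
  then show ?thesis by simp
next
  case True
  note r0 = True
  define V where "V = measure lborel (ball (0::'a) 1)"
  have V0: "V \<ge> 0" unfolding V_def by simp
  define g where "g k z = ennreal (4^(k+1) / r^2) * indicator (ball (0::'a) (r / 2^k)) z" for k z
  have pw: "ennreal (indicator (ball (0::'a) r) z / (norm z)^2) \<le> (\<Sum>k. g k z)" for z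
  proof (cases "z \<in> ball 0 r \<and> z \<noteq> 0")
    case False then show ?thesis by (auto simp: indicator_def)
  next
    case True
    then have t: "0 < norm z" "norm z < r" by auto
    obtain k :: nat where k1: "r / 2^(k+1) \<le> norm z" and k2: "norm z < r / 2^k"
      using dyadic_index[OF t] by blast
    have "1 / (norm z)^2 \<le> 1 / (r / 2^(k+1))^2"
      using k1 t r0 by (intro divide_left_mono power_mono) (auto intro!: mult_pos_pos)
    also have "\<dots> = 4^(k+1) / r^2" by (simp add: power_divide power_mult_distrib[symmetric] power_mult[symmetric] mult.commute four_pow)
    finally have le: "1 / (norm z)^2 \<le> 4^(k+1) / r^2" .
    have "ennreal (indicator (ball (0::'a) r) z / (norm z)^2) = ennreal (1 / (norm z)^2)" using True by simp
    also have "\<dots> \<le> g k z" unfolding g_def using le k2 by (simp add: ennreal_leI)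
    also have "\<dots> \<le> (\<Sum>k\<in>{..<Suc k}. g k z)" by (intro member_le_sum) auto
    also have "\<dots> \<le> (\<Sum>k. g k z)" by (rule sum_le_suminf) auto
    finally show ?thesis .
  qed
  have "(\<integral>\<^sup>+z. ennreal (indicator (ball (0::'a) r) z / (norm z)^2) \<partial>lborel) \<le> (\<integral>\<^sup>+z. (\<Sum>k. g k z) \<partial>lborel)"
    by (intro nn_integral_mono pw)
  also have "\<dots> = (\<Sum>k. \<integral>\<^sup>+z. g k z \<partial>lborel)"
  proof (rule nn_integral_suminf)
    fix k
    have [measurable]: "ball (0::'a) (r / 2^k) \<in> sets borel" by simp
    show "g k \<in> borel_measurable lborel" unfolding g_def by measurable
  qed
  also have "\<dots> = (\<Sum>k. ennreal (4^(k+1) / r^2 * ((r / 2^k)^DIM('a) * V)))"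
  proof (intro suminf_cong)
    fix k :: nat
    have "emeasure lborel (ball (0::'a) (r / 2^k)) = ennreal ((r / 2^k)^DIM('a) * V)"
    proof -
      have "emeasure lborel (ball (0::'a) (r / 2^k)) = ennreal (measure lborel (ball (0::'a) (r / 2^k)))"
        using emeasure_bounded_finite[of "ball (0::'a) (r / 2^k)"] by (intro emeasure_eq_ennreal_measure) auto
      also have "measure lborel (ball (0::'a) (r / 2^k)) = (r / 2^k)^DIM('a) * V"
        unfolding V_def using r0 by (intro content_ball_conv_unit_ball) simp
      finally show ?thesis .
    qed
    moreover have "ennreal (4^(k+1) / r^2) * ennreal ((r / 2^k)^DIM('a) * V) = ennreal (4^(k+1) / r^2 * ((r / 2^k)^DIM('a) * V))"
      by (rule ennreal_mult[symmetric]) (use r0 V0 in auto)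
    ultimately show "(\<integral>\<^sup>+z. g k z \<partial>lborel) = ennreal (4^(k+1) / r^2 * ((r / 2^k)^DIM('a) * V))"
      unfolding g_def by (subst nn_integral_cmult_indicator) auto
  qed
  also have "\<dots> \<le> (\<Sum>k. ennreal (4 * r^DIM('a) / r^2 * V * (1/2)^k))"
  proof (intro suminf_le summableI)
    fix k :: nat
    have "4^(k+1) / r^2 * ((r / 2^k)^DIM('a) * V) = 4 * r^DIM('a) / r^2 * V * (4 / 2^DIM('a))^k"
    proof -
      have p1: "((2::real)^k)^DIM('a) = (2^DIM('a))^k" by (simp add: power_mult[symmetric] mult.commute)
      have "(r / 2^k)^DIM('a) = r^DIM('a) / (2^DIM('a))^k" by (simp add: power_divide p1)
      moreover have "(4 / 2^DIM('a))^k = (4::real)^k / (2^DIM('a))^k" by (simp add: power_divide)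
      ultimately show ?thesis by simp
    qed
    also have "\<dots> \<le> 4 * r^DIM('a) / r^2 * V * (1/2)^k"
    proof (intro mult_left_mono power_mono)
      have "(2::real)^3 \<le> 2^DIM('a)" using N by (intro power_increasing) auto
      then show "4 / 2^DIM('a) \<le> (1/2::real)" by (simp add: field_simps)
    qed (use r0 V0 in auto)
    finally show "ennreal (4^(k+1) / r^2 * ((r / 2^k)^DIM('a) * V)) \<le> ennreal (4 * r^DIM('a) / r^2 * V * (1/2)^k)"
      by (rule ennreal_leI)
  qed
  also have "\<dots> = ennreal (\<Sum>k. 4 * r^DIM('a) / r^2 * V * (1/2)^k)"
    using r0 by (intro suminf_ennreal2 summable_mult summable_geometric) (auto simp: V_def)
  also have "\<dots> < \<infinity>" by simp
  finally show ?thesis .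
qed



definition Iball :: "real \<Rightarrow> ('a::euclidean_space \<Rightarrow> real) \<Rightarrow> 'a \<Rightarrow> real" where
  "Iball r v y = (\<integral>x. indicator (ball y r) x * (v x^2 / (norm (x - y))^2) \<partial>lebesgue)"

lemma ind_shift: fixes y z :: "'a::euclidean_space"
  shows "indicator (ball y r) (y + z) = (indicator (ball 0 r) z :: real)"
proof -
  have "dist y (y + z) = dist 0 z" unfolding dist_norm by (simp add: norm_minus_commute)
  then show ?thesis unfolding indicator_def mem_ball by simp
qed

lemma Iball_shift:
  fixes v :: "'a::euclidean_space \<Rightarrow> real"
  assumes vm: "v \<in> borel_measurable borel"
  shows "Iball r v y = (\<integral>z. indicator (ball 0 r) z * (v (y + z)^2 / (norm z)^2) \<partial>lborel)"
proof -
  have [measurable]: "ball y r \<in> sets borel" by simp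
  note [measurable] = vm
  have m: "(\<lambda>x. indicator (ball y r) x * (v x^2 / (norm (x - y))^2)) \<in> borel_measurable borel" by measurable
  have "Iball r v y = (\<integral>x. indicator (ball y r) x * (v x^2 / (norm (x - y))^2) \<partial>lborel)"
    unfolding Iball_def using m by (intro integral_completion) simp
  also have "\<dots> = (\<integral>z. indicator (ball y r) (y + z) * (v (y + z)^2 / (norm (y + z - y))^2) \<partial>lborel)"
    by (rule integral_lborel_shift[OF m, symmetric])
  also have "\<dots> = (\<integral>z. indicator (ball 0 r) z * (v (y + z)^2 / (norm z)^2) \<partial>lborel)"
    by (simp add: ind_shift)
  finally show ?thesis .
qed

lemma inv_sq_int:
  assumes N: "DIM('a::euclidean_space) \<ge> 3"
  shows "integrable lborel (\<lambda>z. indicator (ball (0::'a) r) z / (norm z)^2)"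
proof (rule integrableI_bounded)
  have [measurable]: "ball (0::'a) r \<in> sets borel" by simp
  show "(\<lambda>z. indicator (ball (0::'a) r) z / (norm z)^2) \<in> borel_measurable lborel" by measurable
  have "(\<lambda>z. ennreal (norm (indicator (ball (0::'a) r) z / (norm z)^2))) = (\<lambda>z. ennreal (indicator (ball (0::'a) r) z / (norm z)^2))"
    by (auto simp: indicator_def)
  then show "(\<integral>\<^sup>+z. ennreal (norm (indicator (ball (0::'a) r) z / (norm z)^2)) \<partial>lborel) < \<infinity>"
    using inv_sq_ball[OF N, of r] by simp
qed

lemma Iball_bound:
  fixes v :: "'a::euclidean_space \<Rightarrow> real"
  assumes N: "DIM('a) \<ge> 3" and vm: "v \<in> borel_measurable borel" and B: "\<And>x. \<bar>v x\<bar> \<le> B"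
  shows "integrable lebesgue (\<lambda>x. indicator (ball y r) x * (v x^2 / (norm (x - y))^2))"
    and "Iball r v y \<le> B^2 * (\<integral>z. indicator (ball (0::'a) r) z / (norm z)^2 \<partial>lborel)"
proof -
  have [measurable]: "ball y r \<in> sets borel" "ball (0::'a) r \<in> sets borel" by simp_all
  note [measurable] = vm
  have m: "(\<lambda>x. indicator (ball y r) x * (v x^2 / (norm (x - y))^2)) \<in> borel_measurable borel" by measurable
  have ms: "(\<lambda>z. indicator (ball 0 r) z * (v (y + z)^2 / (norm z)^2)) \<in> borel_measurable borel" by measurable
  have sq: "v x^2 \<le> B^2" for x using B[of x] by (metis abs_ge_zero power2_abs power_mono)
  have dom: "\<bar>indicator (ball 0 r) z * (v (y + z)^2 / (norm z)^2)\<bar> \<le> B^2 * (indicator (ball (0::'a) r) z / (norm z)^2)" for z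
    using sq[of "y + z"] by (auto simp: indicator_def divide_right_mono)
  have wint: "integrable lborel (\<lambda>z. B^2 * (indicator (ball (0::'a) r) z / (norm z)^2))"
    by (intro integrable_mult_right inv_sq_int[OF N])
  have int2: "integrable lborel (\<lambda>z. indicator (ball 0 r) z * (v (y + z)^2 / (norm z)^2))"
  proof (rule Bochner_Integration.integrable_bound[OF wint])
    show "(\<lambda>z. indicator (ball 0 r) z * (v (y + z)^2 / (norm z)^2)) \<in> borel_measurable lborel"
      using ms by simp
    show "AE z in lborel. norm (indicator (ball 0 r) z * (v (y + z)^2 / (norm z)^2))
        \<le> norm (B^2 * (indicator (ball (0::'a) r) z / (norm z)^2))"
    proof (rule AE_I2)
      fix z
      show "norm (indicator (ball 0 r) z * (v (y + z)^2 / (norm z)^2))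
        \<le> norm (B^2 * (indicator (ball (0::'a) r) z / (norm z)^2))"
        using dom[of z] abs_ge_self[of "B^2 * (indicator (ball (0::'a) r) z / (norm z)^2)"]
        unfolding real_norm_def by linarith
    qed
  qed
  have "integrable lborel (\<lambda>x. (\<lambda>z. indicator (ball 0 r) z * (v (y + z)^2 / (norm z)^2)) (-y + x))"
    by (rule integrable_lborel_shift[OF ms int2])
  moreover have "(\<lambda>x. (\<lambda>z. indicator (ball 0 r) z * (v (y + z)^2 / (norm z)^2)) (-y + x))
      = (\<lambda>x. indicator (ball y r) x * (v x^2 / (norm (x - y))^2))"
  proof
    fix x
    have "indicator (ball 0 r) (-y + x) = (indicator (ball y r) x :: real)"
      using ind_shift[of y r "-y + x"] by simp
    moreover have "-y + x = x - y" by simp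
    ultimately show "(\<lambda>z. indicator (ball 0 r) z * (v (y + z)^2 / (norm z)^2)) (-y + x)
      = indicator (ball y r) x * (v x^2 / (norm (x - y))^2)" by simp
  qed
  ultimately have "integrable lborel (\<lambda>x. indicator (ball y r) x * (v x^2 / (norm (x - y))^2))" by simp
  then show "integrable lebesgue (\<lambda>x. indicator (ball y r) x * (v x^2 / (norm (x - y))^2))"
    using m by (subst integrable_completion) auto
  have "Iball r v y = (\<integral>z. indicator (ball 0 r) z * (v (y + z)^2 / (norm z)^2) \<partial>lborel)"
    by (rule Iball_shift[OF vm])
  also have "\<dots> \<le> (\<integral>z. B^2 * (indicator (ball (0::'a) r) z / (norm z)^2) \<partial>lborel)"
    using dom int2 wint by (intro integral_mono) auto
  also have "\<dots> = B^2 * (\<integral>z. indicator (ball (0::'a) r) z / (norm z)^2 \<partial>lborel)"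
    by (rule integral_mult_right_zero)
  finally show "Iball r v y \<le> B^2 * (\<integral>z. indicator (ball (0::'a) r) z / (norm z)^2 \<partial>lborel)" .
qed

lemma Iball_cont:
  fixes v :: "'a::euclidean_space \<Rightarrow> real"
  assumes N: "DIM('a) \<ge> 3" and vc: "continuous_on UNIV v" and B: "\<And>x. \<bar>v x\<bar> \<le> B"
  shows "((\<lambda>y. Iball r v y) \<longlongrightarrow> Iball r v a) (at a)"
proof -
  have vm: "v \<in> borel_measurable borel" using vc by (rule borel_measurable_continuous_onI)
  have [measurable]: "ball (0::'a) r \<in> sets borel" by simp
  note [measurable] = vm
  have sq: "v x^2 \<le> B^2" for x using B[of x] by (metis abs_ge_zero power2_abs power_mono)
  show ?thesis
  proof (rule tendsto_at_iff_sequentially[THEN iffD2], intro allI impI)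
    fix X :: "nat \<Rightarrow> 'a" assume X: "X \<longlonglongrightarrow> a"
    have "(\<lambda>i. \<integral>z. indicator (ball 0 r) z * (v (X i + z)^2 / (norm z)^2) \<partial>lborel)
        \<longlonglongrightarrow> (\<integral>z. indicator (ball 0 r) z * (v (a + z)^2 / (norm z)^2) \<partial>lborel)"
    proof (rule integral_dominated_convergence[where w = "\<lambda>z. B^2 * (indicator (ball (0::'a) r) z / (norm z)^2)"])
      show "(\<lambda>z. indicator (ball 0 r) z * (v (a + z)^2 / (norm z)^2)) \<in> borel_measurable lborel" by measurable
      show "(\<lambda>z. indicator (ball 0 r) z * (v (X i + z)^2 / (norm z)^2)) \<in> borel_measurable lborel" for i
        by measurable
      show "integrable lborel (\<lambda>z. B^2 * (indicator (ball (0::'a) r) z / (norm z)^2))"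
        by (intro integrable_mult_right inv_sq_int[OF N])
      show "AE z in lborel. (\<lambda>i. indicator (ball 0 r) z * (v (X i + z)^2 / (norm z)^2))
          \<longlonglongrightarrow> indicator (ball 0 r) z * (v (a + z)^2 / (norm z)^2)"
      proof (rule AE_I2)
        fix z
        have "(\<lambda>i. X i + z) \<longlonglongrightarrow> a + z" using X by (intro tendsto_intros)
        then have "(\<lambda>i. v (X i + z)) \<longlonglongrightarrow> v (a + z)"
          using vc by (intro continuous_on_tendsto_compose[OF vc]) auto
        then show "(\<lambda>i. indicator (ball 0 r) z * (v (X i + z)^2 / (norm z)^2))
          \<longlonglongrightarrow> indicator (ball 0 r) z * (v (a + z)^2 / (norm z)^2)"
          by (cases "z = 0") (auto intro!: tendsto_intros)
      qed
      show "AE z in lborel. norm (indicator (ball 0 r) z * (v (X i + z)^2 / (norm z)^2))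
          \<le> B^2 * (indicator (ball (0::'a) r) z / (norm z)^2)" for i
        using sq[of "X i + z" for z] by (intro AE_I2) (auto simp: indicator_def divide_right_mono)
    qed
    then show "((\<lambda>y. Iball r v y) \<circ> X) \<longlonglongrightarrow> Iball r v a"
      unfolding o_def Iball_shift[OF vm] .
  qed
qed



lemma cc_bounded:
  assumes "\<phi> \<in> Cc_inf"
  shows "\<exists>B. \<forall>x. \<bar>(\<phi> :: 'a::euclidean_space \<Rightarrow> real) x\<bar> \<le> B"
proof -
  define S where "S = closure {x. \<phi> x \<noteq> 0}"
  have S: "compact S" using assms unfolding Cc_inf_def S_def by blast
  have c: "continuous_on UNIV \<phi>" by (rule cc_cont[OF assms])
  have "bounded (\<phi> ` S)"
    by (rule compact_imp_bounded[OF compact_continuous_image[OF continuous_on_subset[OF c subset_UNIV] S]])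
  then obtain B where B: "\<And>x. x \<in> S \<Longrightarrow> norm (\<phi> x) \<le> B" unfolding bounded_iff by blast
  have "\<bar>\<phi> x\<bar> \<le> max B 0" for x
  proof (cases "x \<in> S")
    case True then show ?thesis using B[of x] by simp
  next
    case False
    then have "\<phi> x = 0" unfolding S_def using closure_subset[of "{x. \<phi> x \<noteq> 0}"] by (auto simp: subset_iff)
    then show ?thesis by simp
  qed
  then show ?thesis by blast
qed

lemma J_meas:
  fixes v :: "'a::euclidean_space \<Rightarrow> real"
  assumes "v \<in> borel_measurable lebesgue"
  shows "(\<lambda>x. indicator (ball y r) x * (v x^2 / (norm (x - y))^2)) \<in> borel_measurable lebesgue"
proof -
  have [measurable]: "ball y r \<in> sets lebesgue" by simp
  note [measurable] = assms
  have [measurable]: "(\<lambda>x. x) \<in> borel_measurable (lebesgue :: 'a measure)"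
    by (rule measurable_completion) simp
  show ?thesis by measurable
qed

lemma Iball_from_H:
  fixes v :: "'a::euclidean_space \<Rightarrow> real"
  assumes vm: "v \<in> borel_measurable lebesgue" and c: "c \<ge> 0"
    and H: "(\<integral>\<^sup>+x. ennreal (v x^2 / (norm (x - y))^2) \<partial>lebesgue) \<le> ennreal c"
  shows "integrable lebesgue (\<lambda>x. indicator (ball y r) x * (v x^2 / (norm (x - y))^2))"
    and "Iball r v y \<le> c"
proof -
  have le: "(\<integral>\<^sup>+x. ennreal (indicator (ball y r) x * (v x^2 / (norm (x - y))^2)) \<partial>lebesgue) \<le> ennreal c"
  proof -
    have "(\<integral>\<^sup>+x. ennreal (indicator (ball y r) x * (v x^2 / (norm (x - y))^2)) \<partial>lebesgue)
        \<le> (\<integral>\<^sup>+x. ennreal (v x^2 / (norm (x - y))^2) \<partial>lebesgue)"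
      by (intro nn_integral_mono) (auto simp: indicator_def)
    then show ?thesis using H by (rule order_trans)
  qed
  show "integrable lebesgue (\<lambda>x. indicator (ball y r) x * (v x^2 / (norm (x - y))^2))"
  proof (rule integrableI_bounded[OF J_meas[OF vm]])
    have "(\<lambda>x. ennreal (norm (indicator (ball y r) x * (v x^2 / (norm (x - y))^2))))
        = (\<lambda>x. ennreal (indicator (ball y r) x * (v x^2 / (norm (x - y))^2)))"
      by (auto simp: indicator_def)
    then show "(\<integral>\<^sup>+x. ennreal (norm (indicator (ball y r) x * (v x^2 / (norm (x - y))^2))) \<partial>lebesgue) < \<infinity>"
      using le by (simp add: le_less_trans)
  qed
  show "Iball r v y \<le> c" unfolding Iball_def by (rule integral_real_bounded[OF c le])
qed

lemma Iball_ineq: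
  fixes v w d :: "'a::euclidean_space \<Rightarrow> real"
  assumes iv: "integrable lebesgue (\<lambda>x. indicator (ball y r) x * (v x^2 / (norm (x - y))^2))"
    and iw: "integrable lebesgue (\<lambda>x. indicator (ball y r) x * (w x^2 / (norm (x - y))^2))"
    and idd: "integrable lebesgue (\<lambda>x. indicator (ball y r) x * (d x^2 / (norm (x - y))^2))"
    and dd: "\<And>x. d x^2 = (v x - w x)^2" and t: "t > 0"
  shows "Iball r v y \<le> (1 + t) * Iball r w y + (1 + 1 / t) * Iball r d y"
proof -
  have pw: "v x^2 \<le> (1 + t) * w x^2 + (1 + 1 / t) * d x^2" for x
  proof -
    have "(1 + t) * w x^2 + (1 + 1 / t) * d x^2 - v x^2 = (t * w x - (v x - w x))^2 / t"
      using t unfolding dd by (simp add: field_simps power2_eq_square)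
    also have "\<dots> \<ge> 0" using t by simp
    finally show ?thesis by simp
  qed
  have pw2: "indicator (ball y r) x * (v x^2 / (norm (x - y))^2)
      \<le> (1 + t) * (indicator (ball y r) x * (w x^2 / (norm (x - y))^2)) +
        (1 + 1 / t) * (indicator (ball y r) x * (d x^2 / (norm (x - y))^2))" for x
  proof -
    have "v x^2 / (norm (x - y))^2 \<le> ((1 + t) * w x^2 + (1 + 1 / t) * d x^2) / (norm (x - y))^2"
      by (rule divide_right_mono[OF pw]) simp
    then show ?thesis by (simp add: indicator_def add_divide_distrib)
  qed
  have "Iball r v y \<le> (\<integral>x. (1 + t) * (indicator (ball y r) x * (w x^2 / (norm (x - y))^2)) +
        (1 + 1 / t) * (indicator (ball y r) x * (d x^2 / (norm (x - y))^2)) \<partial>lebesgue)"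
    unfolding Iball_def
    by (rule integral_mono[OF iv Bochner_Integration.integrable_add[OF integrable_mult_right[OF iw] integrable_mult_right[OF idd]] pw2])
  also have "\<dots> = (1 + t) * Iball r w y + (1 + 1 / t) * Iball r d y"
    unfolding Iball_def
    by (subst Bochner_Integration.integral_add[OF integrable_mult_right[OF iw] integrable_mult_right[OF idd]])
       (simp only: integral_mult_right_zero)
  finally show ?thesis .
qed



lemma main_general:
  fixes u :: "'a::euclidean_space \<Rightarrow> real" and a :: 'a
  assumes N: "DIM('a) \<ge> 3" and u: "u \<in> D12"
  shows "((\<lambda>y. Iball r u y) \<longlongrightarrow> Iball r u a) (at a)"
proof -
  from u obtain \<phi> :: "nat \<Rightarrow> 'a \<Rightarrow> real" where um: "u \<in> borel_measurable lebesgue"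
    and \<phi>: "\<And>n. \<phi> n \<in> Cc_inf"
    and cauchy: "\<forall>e>0. \<exists>M. \<forall>m\<ge>M. \<forall>n\<ge>M. dirichlet (\<lambda>x. \<phi> m x - \<phi> n x) < e"
    and lim: "(\<lambda>n. \<integral>\<^sup>+ x. ennreal (\<bar>\<phi> n x - u x\<bar> powr (2 * real DIM('a) / (real DIM('a) - 2))) \<partial>lebesgue) \<longlonglongrightarrow> 0"
    unfolding D12_def by blast
  define C where "C = 4 / (real DIM('a) - 2)^2"
  have C0: "C \<ge> 0" unfolding C_def by simp
  have HD: "\<exists>M. \<forall>m\<ge>M. \<forall>y. (\<integral>\<^sup>+x. ennreal ((u x - \<phi> m x)^2 / (norm (x - y))^2) \<partial>lebesgue) \<le> ennreal (C * e)"
    if "e > 0" for e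
    using D12_hardy[OF N um \<phi> cauchy lim that] unfolding C_def .
  have \<phi>m: "\<phi> n \<in> borel_measurable lebesgue" for n by (rule cc_meas[OF \<phi>])
  have \<phi>b: "\<phi> n \<in> borel_measurable borel" for n by (rule cont_borel[OF cc_cont[OF \<phi>], simplified])
  have dm: "(\<lambda>x. u x - \<phi> n x) \<in> borel_measurable lebesgue" for n using um \<phi>m by measurable
  define Kr where "Kr = (\<integral>z. indicator (ball (0::'a) r) z / (norm z)^2 \<partial>lborel)"
  have Kr0: "Kr \<ge> 0" unfolding Kr_def by (intro integral_nonneg_AE AE_I2) (auto simp: indicator_def)
  have diff: "integrable lebesgue (\<lambda>x. indicator (ball y r) x * ((u x - \<phi> m x)^2 / (norm (x - y))^2))
       \<and> Iball r (\<lambda>x. u x - \<phi> m x) y \<le> C * e"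
    if "\<forall>y. (\<integral>\<^sup>+x. ennreal ((u x - \<phi> m x)^2 / (norm (x - y))^2) \<partial>lebesgue) \<le> ennreal (C * e)" "e > 0"
    for m y e
  proof -
    have c: "C * e \<ge> 0" using C0 that(2) by simp
    show ?thesis using Iball_from_H[OF dm[of m] c that(1)[rule_format, of y]] by blast
  qed
  obtain M1 where M1: "\<And>m y. m \<ge> M1 \<Longrightarrow>
      (\<integral>\<^sup>+x. ennreal ((u x - \<phi> m x)^2 / (norm (x - y))^2) \<partial>lebesgue) \<le> ennreal (C * 1)"
    using HD[of 1] by auto
  obtain B0 where B0: "\<And>x. \<bar>\<phi> M1 x\<bar> \<le> B0" using cc_bounded[OF \<phi>] by blast
  have phi_int: "integrable lebesgue (\<lambda>x. indicator (ball y r) x * (\<phi> m x^2 / (norm (x - y))^2))" for m y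
  proof -
    obtain Bm where "\<And>x. \<bar>\<phi> m x\<bar> \<le> Bm" using cc_bounded[OF \<phi>] by blast
    then show ?thesis by (rule Iball_bound(1)[OF N \<phi>b])
  qed
  have d1: "integrable lebesgue (\<lambda>x. indicator (ball y r) x * ((u x - \<phi> m x)^2 / (norm (x - y))^2))"
    "Iball r (\<lambda>x. u x - \<phi> m x) y \<le> C" if "m \<ge> M1" for m y
    using diff[of m 1 y] M1[OF that] by auto
  have u_int: "integrable lebesgue (\<lambda>x. indicator (ball y r) x * (u x^2 / (norm (x - y))^2))" for y
  proof (rule Bochner_Integration.integrable_bound[OF Bochner_Integration.integrable_add[OF
        integrable_mult_right[OF phi_int[where m=M1 and y=y]] integrable_mult_right[OF d1(1)[where m=M1 and y=y, OF order_refl]]]])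
    show "(\<lambda>x. indicator (ball y r) x * (u x^2 / (norm (x - y))^2)) \<in> borel_measurable lebesgue"
      by (rule J_meas[OF um])
    show "AE x in lebesgue. norm (indicator (ball y r) x * (u x^2 / (norm (x - y))^2))
      \<le> norm (2 * (indicator (ball y r) x * (\<phi> M1 x^2 / (norm (x - y))^2)) +
               2 * (indicator (ball y r) x * ((u x - \<phi> M1 x)^2 / (norm (x - y))^2)))"
    proof (rule AE_I2)
      fix x
      have "u x^2 \<le> 2 * \<phi> M1 x^2 + 2 * (u x - \<phi> M1 x)^2"
      proof -
        have "2 * \<phi> M1 x^2 + 2 * (u x - \<phi> M1 x)^2 - u x^2 = (u x - 2 * \<phi> M1 x)^2"
          by (simp add: power2_eq_square algebra_simps)
        then show ?thesis using zero_le_power2[of "u x - 2 * \<phi> M1 x"] by linarith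
      qed
      then have "u x^2 / (norm (x - y))^2 \<le> (2 * \<phi> M1 x^2 + 2 * (u x - \<phi> M1 x)^2) / (norm (x - y))^2"
        by (rule divide_right_mono) simp
      then show "norm (indicator (ball y r) x * (u x^2 / (norm (x - y))^2))
      \<le> norm (2 * (indicator (ball y r) x * (\<phi> M1 x^2 / (norm (x - y))^2)) +
               2 * (indicator (ball y r) x * ((u x - \<phi> M1 x)^2 / (norm (x - y))^2)))"
        by (auto simp: indicator_def add_divide_distrib)
    qed
  qed
  have Bu: "Iball r u y \<le> 2 * (B0^2 * Kr) + 2 * C" for y
  proof -
    have "Iball r u y \<le> (1 + 1) * Iball r (\<phi> M1) y + (1 + 1 / 1) * Iball r (\<lambda>x. u x - \<phi> M1 x) y"
      by (rule Iball_ineq[OF u_int phi_int d1(1)[OF order_refl]]) auto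
    moreover have "Iball r (\<phi> M1) y \<le> B0^2 * Kr" using Iball_bound(2)[OF N \<phi>b B0] unfolding Kr_def .
    moreover have "Iball r (\<lambda>x. u x - \<phi> M1 x) y \<le> C" by (rule d1(2)) simp
    ultimately show ?thesis by simp
  qed
  define B where "B = 2 * (2 * (B0^2 * Kr) + 2 * C) + 2 * C"
  have B0': "B \<ge> 0" unfolding B_def using Kr0 C0 by simp

  have BK: "B0^2 * Kr \<ge> 0" using Kr0 by simp
  have Bu': "Iball r u y \<le> B" for y using Bu[of y] BK C0 unfolding B_def by (smt (verit))
  have Bphi: "Iball r (\<phi> m) y \<le> B" if m: "m \<ge> M1" for m y
  proof -
    have "Iball r (\<phi> m) y \<le> (1 + 1) * Iball r u y + (1 + 1 / 1) * Iball r (\<lambda>x. u x - \<phi> m x) y"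
      by (rule Iball_ineq[OF phi_int u_int d1(1)[OF m]]) (auto simp: power2_commute)
    moreover have "Iball r (\<lambda>x. u x - \<phi> m x) y \<le> C" by (rule d1(2)[OF m])
    ultimately show ?thesis using Bu[of y] unfolding B_def by simp
  qed
  show ?thesis
  proof (rule tendstoI)
    fix \<epsilon> :: real assume \<epsilon>: "\<epsilon> > 0"
    define t where "t = \<epsilon> / (8 * (B + 1))"
    have t0: "t > 0" unfolding t_def using \<epsilon> B0' by simp
    define q where "q = 1 + 1 / t"
    have q0: "q > 0" unfolding q_def using t0 by (simp add: add_pos_nonneg)
    define e where "e = \<epsilon> / (8 * q * (C + 1))"
    have e0: "e > 0" unfolding e_def using \<epsilon> q0 C0 by (simp add: add_pos_nonneg)
    obtain Me where Me: "\<And>m y. m \<ge> Me \<Longrightarrow>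
        (\<integral>\<^sup>+x. ennreal ((u x - \<phi> m x)^2 / (norm (x - y))^2) \<partial>lebesgue) \<le> ennreal (C * e)"
      using HD[OF e0] by auto
    define m where "m = max Me M1"
    have mM1: "m \<ge> M1" and mMe: "m \<ge> Me" unfolding m_def by auto
    have tB: "t * B \<le> \<epsilon> / 8"
    proof -
      have "t * B = \<epsilon> / 8 * (B / (B + 1))" unfolding t_def by (simp add: field_simps)
      also have "\<dots> \<le> \<epsilon> / 8 * 1" using \<epsilon> B0' by (intro mult_left_mono) auto
      finally show ?thesis by simp
    qed
    have tC: "(1 + 1 / t) * (C * e) \<le> \<epsilon> / 8"
    proof -
      have c1: "C + 1 \<noteq> 0" using C0 by simp
      have "(1 + 1 / t) * (C * e) = \<epsilon> / 8 * (C / (C + 1))"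
      proof -
        have nz: "q * 8 + C * (q * 8) \<noteq> 0" using q0 C0 by (smt (verit) mult_nonneg_nonneg)
        show ?thesis unfolding q_def[symmetric] e_def using q0 c1 nz by (simp add: field_simps)
      qed
      also have "\<dots> \<le> \<epsilon> / 8 * 1" using \<epsilon> C0 by (intro mult_left_mono) auto
      finally show ?thesis by simp
    qed
    have close: "\<bar>Iball r u y - Iball r (\<phi> m) y\<bar> \<le> \<epsilon> / 4" for y
    proof -
      have dy: "integrable lebesgue (\<lambda>x. indicator (ball y r) x * ((u x - \<phi> m x)^2 / (norm (x - y))^2))"
        "Iball r (\<lambda>x. u x - \<phi> m x) y \<le> C * e"
        using diff[of m e y] Me[OF mMe] e0 by auto
      have i1: "Iball r u y \<le> (1 + t) * Iball r (\<phi> m) y + (1 + 1 / t) * Iball r (\<lambda>x. u x - \<phi> m x) y"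
        by (rule Iball_ineq[OF u_int phi_int dy(1) _ t0]) simp
      have i2: "Iball r (\<phi> m) y \<le> (1 + t) * Iball r u y + (1 + 1 / t) * Iball r (\<lambda>x. u x - \<phi> m x) y"
        by (rule Iball_ineq[OF phi_int u_int dy(1) _ t0]) (simp add: power2_commute)
      have a1: "t * Iball r (\<phi> m) y \<le> t * B" using Bphi[OF mM1, of y] t0 by simp
      have a2: "t * Iball r u y \<le> t * B" using Bu'[of y] t0 by simp
      have a3: "(1 + 1 / t) * Iball r (\<lambda>x. u x - \<phi> m x) y \<le> (1 + 1 / t) * (C * e)"
        using dy(2) t0 by (intro mult_left_mono) (auto simp: add_pos_nonneg)
      have e1: "(1 + t) * Iball r (\<phi> m) y = Iball r (\<phi> m) y + t * Iball r (\<phi> m) y" by (simp add: algebra_simps)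
      have e2: "(1 + t) * Iball r u y = Iball r u y + t * Iball r u y" by (simp add: algebra_simps)
      show ?thesis unfolding abs_le_iff using i1 i2 a1 a2 a3 tB tC e1 e2 by linarith
    qed
    have "((\<lambda>y. Iball r (\<phi> m) y) \<longlongrightarrow> Iball r (\<phi> m) a) (at a)"
    proof -
      obtain Bm where "\<And>x. \<bar>\<phi> m x\<bar> \<le> Bm" using cc_bounded[OF \<phi>] by blast
      then show ?thesis by (rule Iball_cont[OF N cc_cont[OF \<phi>]])
    qed
    then have "eventually (\<lambda>y. dist (Iball r (\<phi> m) y) (Iball r (\<phi> m) a) < \<epsilon> / 4) (at a)"
      using \<epsilon> by (intro tendstoD) auto
    then show "eventually (\<lambda>y. dist (Iball r u y) (Iball r u a) < \<epsilon>) (at a)"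
    proof eventually_elim
      case (elim y)
      then show ?case using close[of y] close[of a] \<epsilon> unfolding dist_real_def by linarith
    qed
  qed
qed



theorem lemmaA3:
  fixes a :: "real ^ 'n" and r :: real and u :: "real ^ 'n \<Rightarrow> real"
  assumes "CARD('n) \<ge> 3" and "r > 0" and "u \<in> D12"
  shows "((\<lambda>y. \<integral>x\<in>ball y r. (u x)^2 / (norm (x - y))^2 \<partial>lebesgue) \<longlongrightarrow>
            (\<integral>x\<in>ball a r. (u x)^2 / (norm (x - a))^2 \<partial>lebesgue)) (at a)"
proof -
  have N: "DIM(real ^ 'n) \<ge> 3" using assms(1) by simp
  have eq: "(\<integral>x\<in>ball y r. (u x)^2 / (norm (x - y))^2 \<partial>lebesgue) = Iball r u y" for y
    unfolding Iball_def set_lebesgue_integral_def by simp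
  show ?thesis unfolding eq by (rule main_general[OF N assms(3)])
qed


end
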